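(* Let $n\ge 2$, let $(\pi,w)$ and $(\sigma,u)$ be threshold pairs of size $n$, and let $G_1=T(\pi,w)$ and $G_2=T(\sigma,u)$. Then $G_1=G_2$ as labeled graphs if and only if both of the following hold: (a) $w_k=u_k$ for all $k\ge 2$; (b) for every $1\le i\le n$, letting $j$ be the position of $i$ in $\pi$ (i.e. $\pi_j=i$) and $k$ the position of $i$ in $\sigma$ (i.e. $\sigma_k=i$), either $1\in\{j,k\}$ and $w_\ell=w_{\max\{j,k\}}$ for all $1<\ell\le\max\{j,k\}$, or for every $\ell$ with $\min\{j,k\}\le\ell\le\max\{j,k\}$ we have $w_\ell=w_j=w_k$.
   Context: Let $\mathcal{S}_n$ be the set of permutations of $\{1,\dots,n\}$ in one-line notation $\pi=\pi_1\cdots\pi_n$. A threshold pair of size $n$ is a pair $(\pi,w)$ with $\pi\in\mathcal{S}_n$ and $w=w_1\cdots w_n\in\{+1,-1\}^n$. The labeled graph $T(\pi,w)$ on vertex set $\{1,\dots,n\}$ is defined as follows: $G_1$ is the graph with the single vertex $\pi_1$; for $2\le i\le n$, $G_i$ is obtained from $G_{i-1}$ by adding a new vertex $\pi_i$ which is adjacent to every vertex of $G_{i-1}$ if $w_i=+1$ and is isolated if $w_i=-1$; then $T(\pi,w)=G_n$. Two labeled graphs on $\{1,\dots,n\}$ are equal if they have the same edge set. *)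

theory Defs
  imports "HOL-Combinatorics.Permutations"
begin

text \<open>A permutation pi of {1..n} is given in one-line
notation as a function with pi permutes {1..n} (pi i is the i-th entry); a sign word
w is a function nat => int with w i in {1,-1} for 1 <= i <= n. A labeled graph is
represented by its edge set, a set of two-element vertex sets.
thr_step pi w i is the edge set of G_i: G_1 has no edges (G_0 is just the empty start),
and G_{i} arises from G_{i-1} by joining pi i to all pi j, j < i, iff w i = 1.\<close>

fun thr_step :: "(nat \<Rightarrow> nat) \<Rightarrow> (nat \<Rightarrow> int) \<Rightarrow> nat \<Rightarrow> nat set set" where
  "thr_step \<pi> w 0 = {}"
| "thr_step \<pi> w (Suc i) =
     (if w (Suc i) = 1
      then thr_step \<pi> w i \<union> {{\<pi> (Suc i), \<pi> j} | j. 1 \<le> j \<and> j \<le> i}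
      else thr_step \<pi> w i)"

definition threshold_graph :: "nat \<Rightarrow> (nat \<Rightarrow> nat) \<Rightarrow> (nat \<Rightarrow> int) \<Rightarrow> nat set set" where
  "threshold_graph n \<pi> w = thr_step \<pi> w n"

definition threshold_pair :: "nat \<Rightarrow> (nat \<Rightarrow> nat) \<Rightarrow> (nat \<Rightarrow> int) \<Rightarrow> bool" where
  "threshold_pair n \<pi> w \<longleftrightarrow> \<pi> permutes {1..n} \<and> (\<forall>i\<in>{1..n}. w i = 1 \<or> w i = -1)"

end

theory Submission
  imports Defs
begin

lemma thr_step_eq: "thr_step \<pi> w i = {{\<pi> p, \<pi> q} | p q. 1 \<le> q \<and> q < p \<and> p \<le> i \<and> w p = 1}"
proof (induction i)
  case 0 then show ?case by auto
next
  case (Suc i)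
  have split: "{{\<pi> p, \<pi> q} | p q. 1 \<le> q \<and> q < p \<and> p \<le> Suc i \<and> w p = 1} =
     {{\<pi> p, \<pi> q} | p q. 1 \<le> q \<and> q < p \<and> p \<le> i \<and> w p = 1} \<union>
     {{\<pi> p, \<pi> q} | p q. 1 \<le> q \<and> q < p \<and> p = Suc i \<and> w p = 1}"
    by (auto simp: le_Suc_eq)
  show ?case
  proof (cases "w (Suc i) = 1")
    case True
    have "{{\<pi> p, \<pi> q} | p q. 1 \<le> q \<and> q < p \<and> p = Suc i \<and> w p = 1} = {{\<pi> (Suc i), \<pi> j} | j. 1 \<le> j \<and> j \<le> i}"
      using True by (auto simp: less_Suc_eq_le)
    then show ?thesis using Suc True split by simp
  next
    case False
    then show ?thesis using Suc split by simp
  qed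
qed

lemma edge_char:
  assumes tp: "threshold_pair n \<pi> w" and p: "p \<in> {1..n}" and q: "q \<in> {1..n}"
  shows "{\<pi> p, \<pi> q} \<in> threshold_graph n \<pi> w \<longleftrightarrow> p \<noteq> q \<and> w (max p q) = 1"
proof -
  have perm: "\<pi> permutes {1..n}" using tp by (simp add: threshold_pair_def)
  have inj: "inj \<pi>" using permutes_inj[OF perm] .
  have key: "{\<pi> p, \<pi> q} = {\<pi> a, \<pi> b} \<Longrightarrow> {p,q} = {a,b}" for a b
  proof -
    assume "{\<pi> p, \<pi> q} = {\<pi> a, \<pi> b}"
    then have "\<pi> ` {p,q} = \<pi> ` {a,b}" by simp
    then show ?thesis using inj by (meson inj_image_eq_iff)
  qed
  show ?thesis
  proof
    assume "{\<pi> p, \<pi> q} \<in> threshold_graph n \<pi> w"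
    then obtain a b where ab: "{\<pi> p, \<pi> q} = {\<pi> a, \<pi> b}" "1 \<le> b" "b < a" "a \<le> n" "w a = 1"
      unfolding threshold_graph_def thr_step_eq by blast
    then have "{p,q} = {a,b}" using key by blast
    then show "p \<noteq> q \<and> w (max p q) = 1" using ab by (auto simp: doubleton_eq_iff)
  next
    assume h: "p \<noteq> q \<and> w (max p q) = 1"
    show "{\<pi> p, \<pi> q} \<in> threshold_graph n \<pi> w"
    proof (cases "q < p")
      case True
      then show ?thesis using h p q unfolding threshold_graph_def thr_step_eq by auto
    next
      case False
      then have "p < q" using h by auto
      then have "1 \<le> p \<and> p < q \<and> q \<le> n \<and> w q = 1" using h p q by (auto simp: max_def)
      moreover have "{\<pi> p, \<pi> q} = {\<pi> q, \<pi> p}" by auto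
      ultimately show ?thesis unfolding threshold_graph_def thr_step_eq by blast
    qed
  qed
qed

definition deg :: "nat \<Rightarrow> (nat \<Rightarrow> int) \<Rightarrow> nat \<Rightarrow> nat" where
  "deg n w p = card {q\<in>{1..n}. q \<noteq> p \<and> w (max p q) = 1}"

definition vdeg :: "nat \<Rightarrow> nat set set \<Rightarrow> nat \<Rightarrow> nat" where
  "vdeg n E x = card {y\<in>{1..n}. {x,y} \<in> E}"

lemma vdeg_pos:
  assumes tp: "threshold_pair n \<pi> w" and p: "p \<in> {1..n}"
  shows "vdeg n (threshold_graph n \<pi> w) (\<pi> p) = deg n w p"
proof -
  have perm: "\<pi> permutes {1..n}" using tp by (simp add: threshold_pair_def)
  have perm': "inv \<pi> permutes {1..n}" using permutes_inv[OF perm] .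
  have "{y\<in>{1..n}. {\<pi> p,y} \<in> threshold_graph n \<pi> w} = \<pi> ` {q\<in>{1..n}. q \<noteq> p \<and> w (max p q) = 1}"
  proof (intro equalityI subsetI)
    fix y assume y: "y \<in> {y\<in>{1..n}. {\<pi> p,y} \<in> threshold_graph n \<pi> w}"
    define q where "q = inv \<pi> y"
    have yq: "y = \<pi> q" unfolding q_def using permutes_inverses[OF perm] by simp
    have q: "q \<in> {1..n}" unfolding q_def using y permutes_in_image[OF perm'] by simp
    show "y \<in> \<pi> ` {q\<in>{1..n}. q \<noteq> p \<and> w (max p q) = 1}"
      using y q edge_char[OF tp p q] yq by auto
  next
    fix y assume "y \<in> \<pi> ` {q\<in>{1..n}. q \<noteq> p \<and> w (max p q) = 1}"
    then obtain q where q: "q \<in> {1..n}" "q \<noteq> p" "w (max p q) = 1" "y = \<pi> q" by auto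
    then show "y \<in> {y\<in>{1..n}. {\<pi> p,y} \<in> threshold_graph n \<pi> w}"
      using edge_char[OF tp p q(1)] permutes_in_image[OF perm] by auto
  qed
  then show ?thesis unfolding vdeg_def deg_def
    by (simp add: card_image inj_on_subset[OF permutes_inj[OF perm]])
qed

lemma count_eq:
  assumes tp: "threshold_pair n \<pi> w"
  shows "card {p\<in>{1..n}. t \<le> deg n w p} = card {x\<in>{1..n}. t \<le> vdeg n (threshold_graph n \<pi> w) x}"
proof -
  have perm: "\<pi> permutes {1..n}" using tp by (simp add: threshold_pair_def)
  have perm': "inv \<pi> permutes {1..n}" using permutes_inv[OF perm] .
  have "{x\<in>{1..n}. t \<le> vdeg n (threshold_graph n \<pi> w) x} = \<pi> ` {p\<in>{1..n}. t \<le> deg n w p}"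
  proof (intro equalityI subsetI)
    fix y assume y: "y \<in> {x\<in>{1..n}. t \<le> vdeg n (threshold_graph n \<pi> w) x}"
    define q where "q = inv \<pi> y"
    have yq: "y = \<pi> q" unfolding q_def using permutes_inverses[OF perm] by simp
    have q: "q \<in> {1..n}" unfolding q_def using y permutes_in_image[OF perm'] by simp
    show "y \<in> \<pi> ` {p\<in>{1..n}. t \<le> deg n w p}"
      using y q vdeg_pos[OF tp q] yq by auto
  next
    fix y assume "y \<in> \<pi> ` {p\<in>{1..n}. t \<le> deg n w p}"
    then obtain q where q: "q \<in> {1..n}" "t \<le> deg n w q" "y = \<pi> q" by auto
    then show "y \<in> {x\<in>{1..n}. t \<le> vdeg n (threshold_graph n \<pi> w) x}"
      using vdeg_pos[OF tp q(1)] permutes_in_image[OF perm] by auto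
  qed
  then show ?thesis
    by (simp add: card_image inj_on_subset[OF permutes_inj[OF perm]])
qed

lemma deg_top:
  assumes "1 \<le> k" "k \<le> n" "w k = 1"
  shows "deg n w k = (k - 1) + card {q. k < q \<and> q \<le> n \<and> w q = 1}"
proof -
  have "{q\<in>{1..n}. q \<noteq> k \<and> w (max k q) = 1} = {1..<k} \<union> {q. k < q \<and> q \<le> n \<and> w q = 1}"
    using assms by (auto simp: max_def)
  moreover have "card ({1..<k} \<union> {q. k < q \<and> q \<le> n \<and> w q = 1}) = card {1..<k} + card {q. k < q \<and> q \<le> n \<and> w q = 1}"
    by (rule card_Un_disjoint) auto
  ultimately show ?thesis unfolding deg_def by simp
qed

lemma deg_bot:
  assumes "1 \<le> k" "k \<le> n" "w k \<noteq> 1"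
  shows "deg n w k = card {q. k < q \<and> q \<le> n \<and> w q = 1}"
proof -
  have "{q\<in>{1..n}. q \<noteq> k \<and> w (max k q) = 1} = {q. k < q \<and> q \<le> n \<and> w q = 1}"
    using assms by (auto simp: max_def)
  then show ?thesis unfolding deg_def by simp
qed

lemma count_lt:
  assumes k2: "2 \<le> k" and kn: "k \<le> n" and agree: "\<forall>q. k < q \<and> q \<le> n \<longrightarrow> w q = u q"
    and wk: "w k = 1" and uk: "u k \<noteq> 1"
  shows "card {p\<in>{1..n}. deg n w k \<le> deg n u p} < card {p\<in>{1..n}. deg n w k \<le> deg n w p}"
proof -
  define A where "A = {q. k < q \<and> q \<le> n \<and> w q = 1}"
  have AU: "A = {q. k < q \<and> q \<le> n \<and> u q = 1}" unfolding A_def using agree by auto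
  have finA: "finite A" unfolding A_def by (rule finite_subset[of _ "{..n}"]) auto
  have t: "deg n w k = (k - 1) + card A" unfolding A_def using deg_top[of k n w] k2 kn wk by simp
  have low: "deg n u p < deg n w k" if p: "1 \<le> p" "p \<le> k" for p
  proof (cases "p = k")
    case True
    then show ?thesis using deg_bot[of k n u] k2 kn uk t AU by simp
  next
    case False
    have "{q\<in>{1..n}. q \<noteq> p \<and> u (max p q) = 1} \<subseteq> ({1..<k} - {p}) \<union> A"
      using False p uk unfolding AU by (auto simp: max_def) (metis le_eq_less_or_eq not_less)+
    then have "deg n u p \<le> card (({1..<k} - {p}) \<union> A)" unfolding deg_def
      using finA by (intro card_mono) auto
    also have "\<dots> \<le> card ({1..<k} - {p}) + card A" by (rule card_Un_le)
    also have "card ({1..<k} - {p}) = k - 2" using p False by simp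
    finally show ?thesis using t k2 by simp
  qed
  have high: "deg n u p = deg n w p" if p: "k < p" "p \<le> n" for p
  proof -
    have "{q\<in>{1..n}. q \<noteq> p \<and> u (max p q) = 1} = {q\<in>{1..n}. q \<noteq> p \<and> w (max p q) = 1}"
      using agree p by (auto simp: max_def)
    then show ?thesis unfolding deg_def by simp
  qed
  have "{p\<in>{1..n}. deg n w k \<le> deg n u p} \<subset> {p\<in>{1..n}. deg n w k \<le> deg n w p}"
  proof
    show "{p\<in>{1..n}. deg n w k \<le> deg n u p} \<subseteq> {p\<in>{1..n}. deg n w k \<le> deg n w p}"
    proof
      fix p assume p: "p \<in> {p\<in>{1..n}. deg n w k \<le> deg n u p}"
      then have "k < p" using low[of p] by fastforce
      then show "p \<in> {p\<in>{1..n}. deg n w k \<le> deg n w p}" using p high[of p] by auto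
    qed
    have "k \<in> {p\<in>{1..n}. deg n w k \<le> deg n w p}" "k \<notin> {p\<in>{1..n}. deg n w k \<le> deg n u p}"
      using low[of k] k2 kn by auto
    then show "{p\<in>{1..n}. deg n w k \<le> deg n u p} \<noteq> {p\<in>{1..n}. deg n w k \<le> deg n w p}" by blast
  qed
  then show ?thesis by (intro psubset_card_mono) auto
qed

lemma deg_const:
  assumes j1: "1 \<le> j" and jk: "j < k" and kn: "k \<le> n" and eq: "deg n w j = deg n w k"
    and pm: "\<forall>i\<in>{2..n}. w i = 1 \<or> w i = -1"
    and l: "2 \<le> l" "j \<le> l" "l \<le> k"
  shows "w l = w k"
proof (rule ccontr)
  assume ne: "w l \<noteq> w k"
  then have lk: "l < k" using l by (cases "l = k") auto
  define A where "A = {q. k < q \<and> q \<le> n \<and> w q = 1}"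
  have finA: "finite A" unfolding A_def by (rule finite_subset[of _ "{..n}"]) auto
  have fin: "finite {q\<in>{1..n}. q \<noteq> j \<and> w (max j q) = 1}" by simp
  show False
  proof (cases "w k = 1")
    case True
    have t: "deg n w k = (k - 1) + card A" unfolding A_def using deg_top[of k n w] j1 jk kn True by simp
    have wl: "w l \<noteq> 1" using ne True by simp
    show False
    proof (cases "j < l")
      case True
      have "{q\<in>{1..n}. q \<noteq> j \<and> w (max j q) = 1} \<subseteq> ({1..k} - {j} - {l}) \<union> A"
        using True wl lk l unfolding A_def by (auto simp: max_def)
      then have "deg n w j \<le> card (({1..k} - {j} - {l}) \<union> A)" unfolding deg_def
        using finA by (intro card_mono) auto
      also have "\<dots> \<le> card ({1..k} - {j} - {l}) + card A" by (rule card_Un_le)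
      also have "card ({1..k} - {j} - {l}) = k - 2" using l lk True j1 by simp
      finally show False using t eq l lk by simp
    next
      case False
      then have jl: "j = l" using l by simp
      have "{q\<in>{1..n}. q \<noteq> j \<and> w (max j q) = 1} \<subseteq> {j<..k} \<union> A"
        using jl wl unfolding A_def by (auto simp: max_def)
      then have "deg n w j \<le> card ({j<..k} \<union> A)" unfolding deg_def
        using finA by (intro card_mono) auto
      also have "\<dots> \<le> card {j<..k} + card A" by (rule card_Un_le)
      finally show False using t eq l lk jl by simp
    qed
  next
    case False
    have t: "deg n w k = card A" unfolding A_def using deg_bot[of k n w] j1 jk kn False by simp
    have "w k = -1" "w l = 1 \<or> w l = -1" using False pm l lk kn jk j1 by auto
    then have wl: "w l = 1" using ne by auto
    have "\<exists>r. r \<in> {1..n} \<and> r \<notin> A \<and> r \<noteq> j \<and> w (max j r) = 1"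
    proof (cases "j < l")
      case True
      then show ?thesis using wl lk kn l unfolding A_def by (intro exI[of _ l]) (auto simp: max_def)
    next
      case False
      then have "j = l" using l by simp
      then show ?thesis using wl lk kn l unfolding A_def by (intro exI[of _ 1]) (auto simp: max_def)
    qed
    then obtain r where r: "r \<in> {1..n}" "r \<notin> A" "r \<noteq> j" "w (max j r) = 1" by blast
    have "insert r A \<subseteq> {q\<in>{1..n}. q \<noteq> j \<and> w (max j q) = 1}"
      using r jk unfolding A_def by (auto simp: max_def)
    then have "card (insert r A) \<le> deg n w j" unfolding deg_def by (intro card_mono) auto
    then show False using t eq r finA by simp
  qed
qed

lemma pt_iff:
  fixes w :: "nat \<Rightarrow> int"
  assumes "1 \<le> j" "1 \<le> k"
  shows "((1 \<in> {j, k} \<and> (\<forall>l. 1 < l \<and> l \<le> max j k \<longrightarrow> w l = w (max j k))) \<or>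
         (\<forall>l. min j k \<le> l \<and> l \<le> max j k \<longrightarrow> w l = w j \<and> w j = w k))
     \<longleftrightarrow> (\<forall>l. 2 \<le> l \<and> min j k \<le> l \<and> l \<le> max j k \<longrightarrow> w l = w (max j k))"
proof
  assume "(1 \<in> {j, k} \<and> (\<forall>l. 1 < l \<and> l \<le> max j k \<longrightarrow> w l = w (max j k))) \<or>
         (\<forall>l. min j k \<le> l \<and> l \<le> max j k \<longrightarrow> w l = w j \<and> w j = w k)"
  then show "\<forall>l. 2 \<le> l \<and> min j k \<le> l \<and> l \<le> max j k \<longrightarrow> w l = w (max j k)"
  proof
    assume h: "1 \<in> {j, k} \<and> (\<forall>l. 1 < l \<and> l \<le> max j k \<longrightarrow> w l = w (max j k))"
    show ?thesis
    proof (intro allI impI)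
      fix l assume l: "2 \<le> l \<and> min j k \<le> l \<and> l \<le> max j k"
      then have "1 < l \<and> l \<le> max j k" by simp
      then show "w l = w (max j k)" using h by blast
    qed
  next
    assume h: "\<forall>l. min j k \<le> l \<and> l \<le> max j k \<longrightarrow> w l = w j \<and> w j = w k"
    show ?thesis
    proof (intro allI impI)
      fix l assume l: "2 \<le> l \<and> min j k \<le> l \<and> l \<le> max j k"
      then have "w l = w j \<and> w j = w k" using h by blast
      then show "w l = w (max j k)" by (simp add: max_def)
    qed
  qed
next
  assume h: "\<forall>l. 2 \<le> l \<and> min j k \<le> l \<and> l \<le> max j k \<longrightarrow> w l = w (max j k)"
  show "(1 \<in> {j, k} \<and> (\<forall>l. 1 < l \<and> l \<le> max j k \<longrightarrow> w l = w (max j k))) \<or>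
         (\<forall>l. min j k \<le> l \<and> l \<le> max j k \<longrightarrow> w l = w j \<and> w j = w k)"
  proof (cases "1 \<in> {j, k}")
    case True
    have "\<forall>l. 1 < l \<and> l \<le> max j k \<longrightarrow> w l = w (max j k)"
    proof (intro allI impI)
      fix l assume l: "1 < l \<and> l \<le> max j k"
      have "min j k = 1" using True assms by (auto simp: min_def)
      then have "2 \<le> l \<and> min j k \<le> l \<and> l \<le> max j k" using l by simp
      then show "w l = w (max j k)" using h by blast
    qed
    then show ?thesis using True by blast
  next
    case False
    then have j2: "2 \<le> j" "2 \<le> k" using assms by auto
    have hj: "w j = w (max j k)" using h[rule_format, of j] j2 by simp
    have hk: "w k = w (max j k)" using h[rule_format, of k] j2 by simp
    have "\<forall>l. min j k \<le> l \<and> l \<le> max j k \<longrightarrow> w l = w j \<and> w j = w k"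
    proof (intro allI impI)
      fix l assume l: "min j k \<le> l \<and> l \<le> max j k"
      then have "2 \<le> l" using j2 by (simp add: min_def split: if_splits)
      then have "w l = w (max j k)" using h l by blast
      then show "w l = w j \<and> w j = w k" using hj hk by simp
    qed
    then show ?thesis by blast
  qed
qed

lemma b_iff:
  fixes w :: "nat \<Rightarrow> int"
  assumes p1: "\<pi> permutes {1..n}" and p2: "\<sigma> permutes {1..n}"
  shows "(\<forall>i\<in>{1..n}. \<forall>j k. 1 \<le> j \<and> j \<le> n \<and> 1 \<le> k \<and> k \<le> n \<and> \<pi> j = i \<and> \<sigma> k = i \<longrightarrow>
        ((1 \<in> {j, k} \<and> (\<forall>l. 1 < l \<and> l \<le> max j k \<longrightarrow> w l = w (max j k))) \<or>
         (\<forall>l. min j k \<le> l \<and> l \<le> max j k \<longrightarrow> w l = w j \<and> w j = w k)))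
    \<longleftrightarrow> (\<forall>x\<in>{1..n}. \<forall>l. 2 \<le> l \<and> min (inv \<pi> x) (inv \<sigma> x) \<le> l \<and> l \<le> max (inv \<pi> x) (inv \<sigma> x)
          \<longrightarrow> w l = w (max (inv \<pi> x) (inv \<sigma> x)))"
proof -
  have q1: "inv \<pi> permutes {1..n}" using permutes_inv[OF p1] .
  have q2: "inv \<sigma> permutes {1..n}" using permutes_inv[OF p2] .
  have r1: "x \<in> {1..n} \<Longrightarrow> inv \<pi> x \<in> {1..n}" for x using permutes_in_image[OF q1] by simp
  have r2: "x \<in> {1..n} \<Longrightarrow> inv \<sigma> x \<in> {1..n}" for x using permutes_in_image[OF q2] by simp
  have s1: "\<pi> (inv \<pi> x) = x" "\<sigma> (inv \<sigma> x) = x" for x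
    using permutes_inverses[OF p1] permutes_inverses[OF p2] by auto
  have t1: "\<pi> j = i \<Longrightarrow> j = inv \<pi> i" "\<sigma> k = i \<Longrightarrow> k = inv \<sigma> i" for i j k
    using permutes_inv_eq[OF p1] permutes_inv_eq[OF p2] by metis+
  show ?thesis
  proof
    assume h: "\<forall>i\<in>{1..n}. \<forall>j k. 1 \<le> j \<and> j \<le> n \<and> 1 \<le> k \<and> k \<le> n \<and> \<pi> j = i \<and> \<sigma> k = i \<longrightarrow>
        ((1 \<in> {j, k} \<and> (\<forall>l. 1 < l \<and> l \<le> max j k \<longrightarrow> w l = w (max j k))) \<or>
         (\<forall>l. min j k \<le> l \<and> l \<le> max j k \<longrightarrow> w l = w j \<and> w j = w k))"
    show "\<forall>x\<in>{1..n}. \<forall>l. 2 \<le> l \<and> min (inv \<pi> x) (inv \<sigma> x) \<le> l \<and> l \<le> max (inv \<pi> x) (inv \<sigma> x)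
          \<longrightarrow> w l = w (max (inv \<pi> x) (inv \<sigma> x))"
    proof
      fix x assume x: "x \<in> {1..n}"
      have b: "1 \<le> inv \<pi> x" "inv \<pi> x \<le> n" "1 \<le> inv \<sigma> x" "inv \<sigma> x \<le> n" using r1[OF x] r2[OF x] by auto
      have hx: "(1 \<in> {inv \<pi> x, inv \<sigma> x} \<and> (\<forall>l. 1 < l \<and> l \<le> max (inv \<pi> x) (inv \<sigma> x) \<longrightarrow> w l = w (max (inv \<pi> x) (inv \<sigma> x)))) \<or>
         (\<forall>l. min (inv \<pi> x) (inv \<sigma> x) \<le> l \<and> l \<le> max (inv \<pi> x) (inv \<sigma> x) \<longrightarrow> w l = w (inv \<pi> x) \<and> w (inv \<pi> x) = w (inv \<sigma> x))"
        using bspec[OF h x, rule_format, of "inv \<pi> x" "inv \<sigma> x"] b s1 by blast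
      show "\<forall>l. 2 \<le> l \<and> min (inv \<pi> x) (inv \<sigma> x) \<le> l \<and> l \<le> max (inv \<pi> x) (inv \<sigma> x)
          \<longrightarrow> w l = w (max (inv \<pi> x) (inv \<sigma> x))"
        using pt_iff[OF b(1) b(3), of w, THEN iffD1, OF hx] .
    qed
  next
    assume h: "\<forall>x\<in>{1..n}. \<forall>l. 2 \<le> l \<and> min (inv \<pi> x) (inv \<sigma> x) \<le> l \<and> l \<le> max (inv \<pi> x) (inv \<sigma> x)
          \<longrightarrow> w l = w (max (inv \<pi> x) (inv \<sigma> x))"
    show "\<forall>i\<in>{1..n}. \<forall>j k. 1 \<le> j \<and> j \<le> n \<and> 1 \<le> k \<and> k \<le> n \<and> \<pi> j = i \<and> \<sigma> k = i \<longrightarrow>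
        ((1 \<in> {j, k} \<and> (\<forall>l. 1 < l \<and> l \<le> max j k \<longrightarrow> w l = w (max j k))) \<or>
         (\<forall>l. min j k \<le> l \<and> l \<le> max j k \<longrightarrow> w l = w j \<and> w j = w k))"
    proof (intro ballI allI impI)
      fix i j k assume i: "i \<in> {1..n}" and jk: "1 \<le> j \<and> j \<le> n \<and> 1 \<le> k \<and> k \<le> n \<and> \<pi> j = i \<and> \<sigma> k = i"
      have e1: "j = inv \<pi> i" using jk permutes_inv_eq[OF p1] by metis
      have e2: "k = inv \<sigma> i" using jk permutes_inv_eq[OF p2] by metis
      note e = e1 e2
      have hh: "\<forall>l. 2 \<le> l \<and> min j k \<le> l \<and> l \<le> max j k \<longrightarrow> w l = w (max j k)"
        using bspec[OF h i] unfolding e1[symmetric] e2[symmetric] .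
      have j1: "1 \<le> j" and k1: "1 \<le> k" using jk by auto
      show "(1 \<in> {j, k} \<and> (\<forall>l. 1 < l \<and> l \<le> max j k \<longrightarrow> w l = w (max j k))) \<or>
         (\<forall>l. min j k \<le> l \<and> l \<le> max j k \<longrightarrow> w l = w j \<and> w j = w k)"
        using pt_iff[OF j1 k1, of w, THEN iffD2, OF hh] .
    qed
  qed
qed

lemma sub:
  assumes tp1: "threshold_pair n \<pi> w" and tp2: "threshold_pair n \<sigma> u"
    and a: "\<forall>k. 2 \<le> k \<and> k \<le> n \<longrightarrow> w k = u k"
    and U: "\<forall>x\<in>{1..n}. \<forall>l. 2 \<le> l \<and> min (inv \<pi> x) (inv \<sigma> x) \<le> l \<and> l \<le> max (inv \<pi> x) (inv \<sigma> x)
          \<longrightarrow> w l = w (max (inv \<pi> x) (inv \<sigma> x))"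
  shows "threshold_graph n \<pi> w \<subseteq> threshold_graph n \<sigma> u"
proof
  fix e assume "e \<in> threshold_graph n \<pi> w"
  then obtain p q where pq: "e = {\<pi> p, \<pi> q}" "1 \<le> q" "q < p" "p \<le> n" "w p = 1"
    unfolding threshold_graph_def thr_step_eq by blast
  have p1: "\<pi> permutes {1..n}" using tp1 by (simp add: threshold_pair_def)
  have p2: "\<sigma> permutes {1..n}" using tp2 by (simp add: threshold_pair_def)
  have q2: "inv \<sigma> permutes {1..n}" using permutes_inv[OF p2] .
  define x where "x = \<pi> p"
  define y where "y = \<pi> q"
  define c where "c = inv \<sigma> x"
  define d where "d = inv \<sigma> y"
  have x: "x \<in> {1..n}" unfolding x_def using pq permutes_in_image[OF p1] by simp
  have y: "y \<in> {1..n}" unfolding y_def using pq permutes_in_image[OF p1] by simp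
  have c: "c \<in> {1..n}" unfolding c_def using x permutes_in_image[OF q2] by simp
  have d: "d \<in> {1..n}" unfolding d_def using y permutes_in_image[OF q2] by simp
  have Px: "inv \<pi> x = p" unfolding x_def using permutes_inverses[OF p1] by simp
  have Py: "inv \<pi> y = q" unfolding y_def using permutes_inverses[OF p1] by simp
  have sc: "\<sigma> c = x" unfolding c_def using permutes_inverses[OF p2] by simp
  have sd: "\<sigma> d = y" unfolding d_def using permutes_inverses[OF p2] by simp
  have xy: "x \<noteq> y" unfolding x_def y_def using pq permutes_inj[OF p1] by (metis inj_eq less_irrefl)
  have cd: "c \<noteq> d" using xy sc sd by auto
  have Ux: "\<And>l. 2 \<le> l \<and> min p c \<le> l \<and> l \<le> max p c \<Longrightarrow> w l = w (max p c)"
    using bspec[OF U x] unfolding Px c_def[symmetric] by blast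
  have Uy: "\<And>l. 2 \<le> l \<and> min q d \<le> l \<and> l \<le> max q d \<Longrightarrow> w l = w (max q d)"
    using bspec[OF U y] unfolding Py d_def[symmetric] by blast
  have m2: "2 \<le> max c d" using c d cd by auto
  have "w (max c d) = w p"
  proof (cases "p \<le> max c d")
    case True
    show ?thesis
    proof (cases "d \<le> c")
      case True
      then have "max c d = c" by simp
      moreover have "w p = w (max p c)" using Ux[of p] pq by auto
      moreover have "max p c = c" using \<open>p \<le> max c d\<close> True by simp
      ultimately show ?thesis by simp
    next
      case False
      then have md: "max c d = d" by simp
      have "w p = w (max q d)" using Uy[of p] pq \<open>p \<le> max c d\<close> md by auto
      moreover have "max q d = d" using \<open>p \<le> max c d\<close> md pq by simp
      ultimately show ?thesis using md by simp
    qed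
  next
    case False
    then have "c < p" "d < p" by auto
    then have "2 \<le> max c d \<and> min p c \<le> max c d \<and> max c d \<le> max p c" using m2 by simp
    then have "w (max c d) = w (max p c)" using Ux by blast
    moreover have "max p c = p" using False by simp
    ultimately show ?thesis by simp
  qed
  then have "u (max c d) = 1" using a m2 c d pq by auto
  then have "{\<sigma> c, \<sigma> d} \<in> threshold_graph n \<sigma> u" using edge_char[OF tp2 c d] cd by simp
  then show "e \<in> threshold_graph n \<sigma> u" using pq sc sd unfolding x_def y_def by simp
qed

theorem lemma3:
  fixes n :: nat and \<pi> \<sigma> :: "nat \<Rightarrow> nat" and w u :: "nat \<Rightarrow> int"
  assumes "n \<ge> 2"
    and "threshold_pair n \<pi> w"
    and "threshold_pair n \<sigma> u"
  shows "threshold_graph n \<pi> w = threshold_graph n \<sigma> u \<longleftrightarrow>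
    ((\<forall>k. 2 \<le> k \<and> k \<le> n \<longrightarrow> w k = u k) \<and>
     (\<forall>i\<in>{1..n}. \<forall>j k. 1 \<le> j \<and> j \<le> n \<and> 1 \<le> k \<and> k \<le> n \<and> \<pi> j = i \<and> \<sigma> k = i \<longrightarrow>
        ((1 \<in> {j, k} \<and> (\<forall>l. 1 < l \<and> l \<le> max j k \<longrightarrow> w l = w (max j k))) \<or>
         (\<forall>l. min j k \<le> l \<and> l \<le> max j k \<longrightarrow> w l = w j \<and> w j = w k))))"
proof -
  note tp1 = assms(2) and tp2 = assms(3)
  have p1: "\<pi> permutes {1..n}" using tp1 by (simp add: threshold_pair_def)
  have p2: "\<sigma> permutes {1..n}" using tp2 by (simp add: threshold_pair_def)
  have q1: "inv \<pi> permutes {1..n}" using permutes_inv[OF p1] .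
  have q2: "inv \<sigma> permutes {1..n}" using permutes_inv[OF p2] .
  have r1: "x \<in> {1..n} \<Longrightarrow> inv \<pi> x \<in> {1..n}" for x using permutes_in_image[OF q1] by simp
  have r2: "x \<in> {1..n} \<Longrightarrow> inv \<sigma> x \<in> {1..n}" for x using permutes_in_image[OF q2] by simp
  have s1: "\<pi> (inv \<pi> x) = x" "\<sigma> (inv \<sigma> x) = x" for x
    using permutes_inverses[OF p1] permutes_inverses[OF p2] by auto
  have pmw: "\<forall>i\<in>{2..n}. w i = 1 \<or> w i = -1" using tp1 by (auto simp: threshold_pair_def)
  have pmu: "\<forall>i\<in>{2..n}. u i = 1 \<or> u i = -1" using tp2 by (auto simp: threshold_pair_def)
  note bU = b_iff[OF p1 p2, of w]
  show ?thesis
  proof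
    assume E: "threshold_graph n \<pi> w = threshold_graph n \<sigma> u"
    have degeq: "deg n w (inv \<pi> x) = deg n u (inv \<sigma> x)" if x: "x \<in> {1..n}" for x
      using vdeg_pos[OF tp1 r1[OF x]] vdeg_pos[OF tp2 r2[OF x]] E s1 by simp
    have cnt: "card {p\<in>{1..n}. t \<le> deg n w p} = card {p\<in>{1..n}. t \<le> deg n u p}" for t
      using count_eq[OF tp1, of t] count_eq[OF tp2, of t] E by simp
    have a: "\<forall>k. 2 \<le> k \<and> k \<le> n \<longrightarrow> w k = u k"
    proof (rule ccontr)
      assume na: "\<not> (\<forall>k. 2 \<le> k \<and> k \<le> n \<longrightarrow> w k = u k)"
      define K where "K = {k. 2 \<le> k \<and> k \<le> n \<and> w k \<noteq> u k}"
      have Kne: "K \<noteq> {}" using na unfolding K_def by auto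
      have Kfin: "finite K" unfolding K_def by (rule finite_subset[of _ "{..n}"]) auto
      define k where "k = Max K"
      have kK: "k \<in> K" unfolding k_def using Max_in[OF Kfin Kne] .
      then have k2: "2 \<le> k" and kn: "k \<le> n" and wu: "w k \<noteq> u k" unfolding K_def by auto
      have above: "\<forall>q. k < q \<and> q \<le> n \<longrightarrow> w q = u q"
      proof (intro allI impI)
        fix q assume q: "k < q \<and> q \<le> n"
        show "w q = u q"
        proof (rule ccontr)
          assume "w q \<noteq> u q"
          then have "q \<in> K" using q k2 unfolding K_def by auto
          then have "q \<le> k" unfolding k_def using Max_ge[OF Kfin] by blast
          then show False using q by simp
        qed
      qed
      have above': "\<forall>q. k < q \<and> q \<le> n \<longrightarrow> u q = w q" using above by auto
      have "w k = 1 \<or> w k = -1" "u k = 1 \<or> u k = -1" using pmw pmu k2 kn by auto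
      then consider "w k = 1" "u k \<noteq> 1" | "u k = 1" "w k \<noteq> 1" using wu by auto
      then show False
      proof cases
        case 1
        show False using count_lt[OF k2 kn above 1] cnt[of "deg n w k"] by simp
      next
        case 2
        show False using count_lt[OF k2 kn above' 2] cnt[of "deg n u k"] by simp
      qed
    qed
    have degwu: "deg n u p = deg n w p" if p: "p \<in> {1..n}" for p
    proof -
      have "{q\<in>{1..n}. q \<noteq> p \<and> u (max p q) = 1} = {q\<in>{1..n}. q \<noteq> p \<and> w (max p q) = 1}"
      proof (intro Collect_cong conj_cong refl)
        fix q assume q: "q \<in> {1..n}" and qp: "q \<noteq> p"
        have "2 \<le> max p q" "max p q \<le> n" using p q qp by auto
        then show "(u (max p q) = 1) = (w (max p q) = 1)" using a by auto
      qed
      then show ?thesis unfolding deg_def by simp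
    qed
    have U: "\<forall>x\<in>{1..n}. \<forall>l. 2 \<le> l \<and> min (inv \<pi> x) (inv \<sigma> x) \<le> l \<and> l \<le> max (inv \<pi> x) (inv \<sigma> x)
          \<longrightarrow> w l = w (max (inv \<pi> x) (inv \<sigma> x))"
    proof (intro ballI allI impI)
      fix x l assume x: "x \<in> {1..n}"
        and l: "2 \<le> l \<and> min (inv \<pi> x) (inv \<sigma> x) \<le> l \<and> l \<le> max (inv \<pi> x) (inv \<sigma> x)"
      define j where "j = inv \<pi> x"
      define k where "k = inv \<sigma> x"
      have j: "j \<in> {1..n}" unfolding j_def using r1[OF x] .
      have k: "k \<in> {1..n}" unfolding k_def using r2[OF x] .
      have eq: "deg n w j = deg n w k" unfolding j_def k_def using degeq[OF x] degwu[OF r2[OF x]] by simp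
      have l': "2 \<le> l" "min j k \<le> l" "l \<le> max j k" using l unfolding j_def k_def by auto
      have "w l = w (max j k)"
      proof (cases j k rule: linorder_cases)
        case less
        then show ?thesis using deg_const[of j k n w l] j k eq pmw l' by simp
      next
        case equal
        then show ?thesis using l' by simp
      next
        case greater
        then show ?thesis using deg_const[of k j n w l] j k eq pmw l' by simp
      qed
      then show "w l = w (max (inv \<pi> x) (inv \<sigma> x))" unfolding j_def k_def .
    qed
    show "(\<forall>k. 2 \<le> k \<and> k \<le> n \<longrightarrow> w k = u k) \<and>
     (\<forall>i\<in>{1..n}. \<forall>j k. 1 \<le> j \<and> j \<le> n \<and> 1 \<le> k \<and> k \<le> n \<and> \<pi> j = i \<and> \<sigma> k = i \<longrightarrow>
        ((1 \<in> {j, k} \<and> (\<forall>l. 1 < l \<and> l \<le> max j k \<longrightarrow> w l = w (max j k))) \<or>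
         (\<forall>l. min j k \<le> l \<and> l \<le> max j k \<longrightarrow> w l = w j \<and> w j = w k)))"
      using a bU[THEN iffD2, OF U] by (intro conjI)
  next
    assume h: "(\<forall>k. 2 \<le> k \<and> k \<le> n \<longrightarrow> w k = u k) \<and>
     (\<forall>i\<in>{1..n}. \<forall>j k. 1 \<le> j \<and> j \<le> n \<and> 1 \<le> k \<and> k \<le> n \<and> \<pi> j = i \<and> \<sigma> k = i \<longrightarrow>
        ((1 \<in> {j, k} \<and> (\<forall>l. 1 < l \<and> l \<le> max j k \<longrightarrow> w l = w (max j k))) \<or>
         (\<forall>l. min j k \<le> l \<and> l \<le> max j k \<longrightarrow> w l = w j \<and> w j = w k)))"
    have a: "\<forall>k. 2 \<le> k \<and> k \<le> n \<longrightarrow> w k = u k" using h by (rule conjunct1)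
    have a': "\<forall>k. 2 \<le> k \<and> k \<le> n \<longrightarrow> u k = w k" using a by auto
    have Uw: "\<forall>x\<in>{1..n}. \<forall>l. 2 \<le> l \<and> min (inv \<pi> x) (inv \<sigma> x) \<le> l \<and> l \<le> max (inv \<pi> x) (inv \<sigma> x)
          \<longrightarrow> w l = w (max (inv \<pi> x) (inv \<sigma> x))" using bU[THEN iffD1, OF conjunct2[OF h]] .
    have Uu: "\<forall>x\<in>{1..n}. \<forall>l. 2 \<le> l \<and> min (inv \<sigma> x) (inv \<pi> x) \<le> l \<and> l \<le> max (inv \<sigma> x) (inv \<pi> x)
          \<longrightarrow> u l = u (max (inv \<sigma> x) (inv \<pi> x))"
    proof (intro ballI allI impI)
      fix x l assume x: "x \<in> {1..n}"
        and l: "2 \<le> l \<and> min (inv \<sigma> x) (inv \<pi> x) \<le> l \<and> l \<le> max (inv \<sigma> x) (inv \<pi> x)"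
      have l2: "2 \<le> l \<and> min (inv \<pi> x) (inv \<sigma> x) \<le> l \<and> l \<le> max (inv \<pi> x) (inv \<sigma> x)"
        using l by (simp add: min.commute max.commute)
      have wl: "w l = w (max (inv \<pi> x) (inv \<sigma> x))" using bspec[OF Uw x] l2 by blast
      have mn: "max (inv \<pi> x) (inv \<sigma> x) \<le> n" using r1[OF x] r2[OF x] by simp
      have "u l = w l" using a l mn by auto
      also have "\<dots> = w (max (inv \<pi> x) (inv \<sigma> x))" using wl .
      also have "\<dots> = u (max (inv \<pi> x) (inv \<sigma> x))" using a l mn by auto
      finally show "u l = u (max (inv \<sigma> x) (inv \<pi> x))" by (simp add: max.commute)
    qed
    show "threshold_graph n \<pi> w = threshold_graph n \<sigma> u"
      using sub[OF tp1 tp2 a Uw] sub[OF tp2 tp1 a' Uu] by (rule equalityI)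
  qed
qed

end
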